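(* Let $k\ge3$. There exist $n_0(k)$ and $C_k$ such that for all $n\ge n_0(k)$ and all $\gamma$ with $|\gamma-\frac12|\le n^{-1/3}$, there exists a unique $\lambda=\lambda(\gamma)\in\mathbb R$ with $\sum_{j=1}^{k-1}j\,\nu_{\gamma,\lambda}(j)=k\gamma$. Furthermore $\lambda(1/2)=0$ and $|\lambda(\gamma)|\le C_k n^{-1/3}$ for all such $\gamma$.
   Context: For $\gamma\in(0,1)$ let $p_\gamma(j)=\binom kj\gamma^j(1-\gamma)^{k-j}$, and for $\lambda\in\mathbb R$ define the probability measure $\nu_{\gamma,\lambda}$ on $\{1,\dots,k-1\}$ by $\nu_{\gamma,\lambda}(j)=p_\gamma(j)e^{\lambda j}/\sum_{i=1}^{k-1}p_\gamma(i)e^{\lambda i}$. *)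

theory Defs
  imports Complex_Main
begin

definition p_bin :: "nat \<Rightarrow> real \<Rightarrow> nat \<Rightarrow> real" where
  "p_bin k \<gamma> j = real (k choose j) * \<gamma> ^ j * (1 - \<gamma>) ^ (k - j)"

definition nu :: "nat \<Rightarrow> real \<Rightarrow> real \<Rightarrow> nat \<Rightarrow> real" where
  "nu k \<gamma> l j = p_bin k \<gamma> j * exp (l * real j) /
      (\<Sum>i=1..k-1. p_bin k \<gamma> i * exp (l * real i))"

end

theory Submission
  imports Defs
begin

lemma pow_diff_le:
  fixes x y :: real
  assumes "0 \<le> x" "x \<le> 1" "0 \<le> y" "y \<le> 1"
  shows "\<bar>x ^ n - y ^ n\<bar> \<le> real n * \<bar>x - y\<bar>"
proof (induction n)
  case 0 then show ?case by simp
next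
  case (Suc n)
  have e: "x ^ Suc n - y ^ Suc n = x * (x ^ n - y ^ n) + y ^ n * (x - y)"
    by (simp add: algebra_simps)
  have "\<bar>x * (x ^ n - y ^ n)\<bar> \<le> \<bar>x ^ n - y ^ n\<bar>"
    using assms by (simp add: abs_mult mult_left_le_one_le)
  moreover have "\<bar>y ^ n * (x - y)\<bar> \<le> \<bar>x - y\<bar>"
    using assms by (simp add: abs_mult mult_left_le_one_le power_le_one)
  ultimately show ?case using Suc e by (simp add: algebra_simps)
qed

lemma term_ineq:
  fixes t d :: real
  assumes "t \<ge> 0"
  shows "d * (exp (t * d) - 1) \<ge> t * d^2 * exp (- t * \<bar>d\<bar>)"
proof (cases "d \<ge> 0")
  case True
  have "exp (t*d) - 1 \<ge> t * d" using exp_ge_add_one_self[of "t*d"] by linarith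
  moreover have "exp (- t * \<bar>d\<bar>) \<le> 1" using assms True by simp
  ultimately have "t * d * exp (- t * \<bar>d\<bar>) \<le> exp (t*d) - 1"
  proof -
    have "t * d * exp (- t * \<bar>d\<bar>) \<le> t * d"
      using assms True \<open>exp (- t * \<bar>d\<bar>) \<le> 1\<close> by (intro mult_left_le) auto
    then show ?thesis using \<open>exp (t*d) - 1 \<ge> t * d\<close> by linarith
  qed
  then have "d * (t * d * exp (- t * \<bar>d\<bar>)) \<le> d * (exp (t*d) - 1)"
    using True by (rule mult_left_mono)
  then show ?thesis by (simp add: power2_eq_square mult_ac)
next
  case False
  define x where "x = t * \<bar>d\<bar>"
  have x0: "x \<ge> 0" using assms by (simp add: x_def)
  have "exp x - 1 \<ge> x" using exp_ge_add_one_self[of x] by linarith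
  then have "(exp x - 1) * exp (-x) \<ge> x * exp (-x)" by (simp add: mult_right_mono)
  then have h: "1 - exp (-x) \<ge> x * exp (-x)"
    by (simp add: algebra_simps exp_minus_inverse)
  have "d * (exp (t * d) - 1) = \<bar>d\<bar> * (1 - exp (-x))"
    using False by (simp add: x_def algebra_simps)
  also have "\<dots> \<ge> \<bar>d\<bar> * (x * exp (-x))" using h by (simp add: mult_left_mono)
  finally show ?thesis using False
    by (simp add: x_def power2_eq_square algebra_simps)
qed

definition G :: "nat \<Rightarrow> real \<Rightarrow> real \<Rightarrow> real" where
  "G k g l = (\<Sum>j=1..k-1. (real j - real k * g) * p_bin k g j * exp (l * (real j - real k * g)))"

lemma p_bin_pos: "0 < g \<Longrightarrow> g < 1 \<Longrightarrow> j \<le> k \<Longrightarrow> p_bin k g j > 0"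
  by (simp add: p_bin_def)

lemma eq_iff:
  assumes "0 < g" "g < 1" "k \<ge> 2"
  shows "(\<Sum>j=1..k-1. real j * nu k g l j) = real k * g \<longleftrightarrow> G k g l = 0"
proof -
  define Z where "Z = (\<Sum>i=1..k-1. p_bin k g i * exp (l * real i))"
  have Zp: "Z > 0" unfolding Z_def
    by (rule sum_pos) (use assms in \<open>auto intro!: mult_pos_pos p_bin_pos\<close>)
  have S: "(\<Sum>j=1..k-1. real j * nu k g l j) = (\<Sum>j=1..k-1. real j * p_bin k g j * exp (l * real j)) / Z"
    unfolding nu_def Z_def[symmetric] by (simp add: sum_divide_distrib mult.assoc)
  then have "(\<Sum>j=1..k-1. real j * nu k g l j) = real k * g \<longleftrightarrow>
     (\<Sum>j=1..k-1. real j * p_bin k g j * exp (l * real j)) - real k * g * Z = 0"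
    unfolding S using Zp by (simp add: divide_eq_eq)
  also have "(\<Sum>j=1..k-1. real j * p_bin k g j * exp (l * real j)) - real k * g * Z
      = (\<Sum>j=1..k-1. (real j - real k * g) * p_bin k g j * exp (l * real j))"
    unfolding Z_def by (simp add: sum_distrib_left sum_subtractf[symmetric] algebra_simps)
  also have "\<dots> = exp (l * (real k * g)) * G k g l"
    unfolding G_def sum_distrib_left
    by (rule sum.cong) (simp_all add: algebra_simps exp_add[symmetric])
  finally show ?thesis by simp
qed

lemma G_strict_mono:
  assumes "0 < g" "g < 1" "k \<ge> 2" "real k * g \<noteq> 1" "l1 < l2"
  shows "G k g l1 < G k g l2"
  unfolding G_def
proof (rule sum_strict_mono_ex1)
  have key: "d * c * exp (l1 * d) \<le> d * c * exp (l2 * d) \<and> (d \<noteq> 0 \<longrightarrow> d * c * exp (l1 * d) < d * c * exp (l2 * d))"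
    if "c > 0" for c d :: real
  proof (cases "d > 0")
    case True
    then have "exp (l1 * d) < exp (l2 * d)" using assms by simp
    then show ?thesis using True that by simp
  next
    case False
    show ?thesis
    proof (cases "d = 0")
      case True then show ?thesis by simp
    next
      case F: False
      with False have "d < 0" by simp
      then have "exp (l2 * d) < exp (l1 * d)" using assms by (simp add: mult_strict_right_mono_neg)
      then have "d * exp (l1 * d) < d * exp (l2 * d)" using \<open>d < 0\<close> by simp
      then show ?thesis using that \<open>d < 0\<close> by (simp add: mult.commute mult.left_commute)
    qed
  qed
  show "finite {1..k-1}" by simp
  show "\<forall>x\<in>{1..k-1}. (real x - real k * g) * p_bin k g x * exp (l1 * (real x - real k * g))
      \<le> (real x - real k * g) * p_bin k g x * exp (l2 * (real x - real k * g))"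
    using key p_bin_pos assms by auto
  show "\<exists>a\<in>{1..k-1}. (real a - real k * g) * p_bin k g a * exp (l1 * (real a - real k * g))
      < (real a - real k * g) * p_bin k g a * exp (l2 * (real a - real k * g))"
    apply (rule bexI[of _ 1])
    using key[of "p_bin k g 1" "1 - real k * g"] p_bin_pos[of g 1 k] assms by auto
qed

lemma binom_sum1: "(\<Sum>j\<le>k. p_bin k g j) = 1"
  using binomial_ring[of g "1 - g" k] by (simp add: p_bin_def)

lemma binom_sum2: "(\<Sum>j\<le>k. real j * p_bin k g j) = real k * g"
proof (cases k)
  case 0 then show ?thesis by simp
next
  case (Suc m)
  have "(\<Sum>j\<le>Suc m. real j * p_bin (Suc m) g j)
      = (\<Sum>i\<le>m. real (Suc i) * p_bin (Suc m) g (Suc i))"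
    by (subst sum.atMost_Suc_shift) simp
  also have "\<dots> = (\<Sum>i\<le>m. real (Suc m) * g * (real (m choose i) * g ^ i * (1 - g) ^ (m - i)))"
  proof (rule sum.cong)
    fix i assume "i \<in> {..m}"
    have "real (Suc i) * real (Suc m choose Suc i) = real (Suc m) * real (m choose i)"
      using Suc_times_binomial[of i m] by (metis of_nat_mult)
    moreover have "real (Suc i) * p_bin (Suc m) g (Suc i) = (real (Suc i) * real (Suc m choose Suc i)) * (g * g ^ i * (1 - g) ^ (m - i))"
      by (simp add: p_bin_def mult_ac)
    ultimately show "real (Suc i) * p_bin (Suc m) g (Suc i) = real (Suc m) * g * (real (m choose i) * g ^ i * (1 - g) ^ (m - i))"
      by (simp add: mult_ac)
  qed simp
  also have "\<dots> = real (Suc m) * g * (g + (1 - g)) ^ m"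
    unfolding binomial_ring[of g "1 - g" m] by (simp add: sum_distrib_left)
  finally show ?thesis using Suc by simp
qed

lemma split_sum:
  fixes k :: nat
  assumes "k \<ge> 2"
  shows "(\<Sum>j\<le>k. f j) = f 0 + f k + (\<Sum>j=1..k-1. (f j :: real))"
proof -
  have "{..k} = insert 0 (insert k {1..k-1})" using assms by auto
  then show ?thesis using assms by (simp add: algebra_simps)
qed

lemma G0:
  assumes "k \<ge> 2"
  shows "G k g 0 = real k * g * (1 - g) * ((1 - g) ^ (k - 1) - g ^ (k - 1))"
proof -
  have "G k g 0 = (\<Sum>j=1..k-1. real j * p_bin k g j) - real k * g * (\<Sum>j=1..k-1. p_bin k g j)"
    unfolding G_def by (simp add: algebra_simps sum_subtractf sum_distrib_left)
  also have "\<dots> = (real k * g - real k * p_bin k g k) - real k * g * (1 - p_bin k g 0 - p_bin k g k)"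
    using split_sum[OF assms, of "\<lambda>j. real j * p_bin k g j"] split_sum[OF assms, of "p_bin k g"]
      binom_sum1[of k g] binom_sum2[of k g] by simp
  also have "\<dots> = real k * g * (1 - g) * ((1 - g) ^ (k - 1) - g ^ (k - 1))"
  proof -
    obtain m where m: "k = Suc m" using assms by (cases k) auto
    show ?thesis unfolding p_bin_def m by (simp add: algebra_simps)
  qed
  finally show ?thesis .
qed

lemma G_diff: "G k g t - G k g 0 = (\<Sum>j=1..k-1. (real j - real k * g) * (exp (t * (real j - real k * g)) - 1) * p_bin k g j)"
  unfolding G_def by (simp add: sum_subtractf[symmetric] algebra_simps)

lemma d_bound: "0 \<le> g \<Longrightarrow> g \<le> 1 \<Longrightarrow> j \<in> {1..k-1} \<Longrightarrow> \<bar>real j - real k * g\<bar> \<le> real k"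
proof -
  assume a: "0 \<le> g" "g \<le> 1" "j \<in> {1..k-1}"
  then have "real j \<le> real k" by auto
  moreover have "real k * g \<le> real k" using a mult_left_le[of g "real k"] by simp
  moreover have "0 \<le> real k * g" using a by simp
  ultimately show ?thesis by linarith
qed

lemma G_lower:
  assumes "t \<ge> 0" "0 \<le> g" "g \<le> 1"
  shows "G k g t - G k g 0 \<ge> t * exp (- t * real k) * (\<Sum>j=1..k-1. (real j - real k * g)^2 * p_bin k g j)"
proof -
  have "t * exp (- t * real k) * (\<Sum>j=1..k-1. (real j - real k * g)^2 * p_bin k g j)
     = (\<Sum>j=1..k-1. t * (real j - real k * g)^2 * exp (- t * real k) * p_bin k g j)"
    by (simp add: sum_distrib_left algebra_simps)
  also have "\<dots> \<le> (\<Sum>j=1..k-1. (real j - real k * g) * (exp (t * (real j - real k * g)) - 1) * p_bin k g j)"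
  proof (rule sum_mono)
    fix j assume j: "j \<in> {1..k-1}"
    define d where "d = real j - real k * g"
    have pj: "p_bin k g j \<ge> 0" unfolding p_bin_def using assms by simp
    have "exp (- t * real k) \<le> exp (- t * \<bar>d\<bar>)"
      using d_bound[OF assms(2,3) j] assms(1) unfolding d_def by (simp add: mult_left_mono)
    then have "t * d^2 * exp (- t * real k) \<le> t * d^2 * exp (- t * \<bar>d\<bar>)"
      using assms(1) by (simp add: mult_left_mono)
    also have "\<dots> \<le> d * (exp (t * d) - 1)" by (rule term_ineq[OF assms(1)])
    finally show "t * (real j - real k * g)^2 * exp (- t * real k) * p_bin k g j
        \<le> (real j - real k * g) * (exp (t * (real j - real k * g)) - 1) * p_bin k g j"
      using pj unfolding d_def by (simp add: mult_right_mono)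
  qed
  finally show ?thesis unfolding G_diff .
qed

lemma G_upper:
  assumes "t \<ge> 0" "0 \<le> g" "g \<le> 1"
  shows "G k g (- t) - G k g 0 \<le> - (t * exp (- t * real k) * (\<Sum>j=1..k-1. (real j - real k * g)^2 * p_bin k g j))"
proof -
  have "t * exp (- t * real k) * (\<Sum>j=1..k-1. (real j - real k * g)^2 * p_bin k g j)
     = (\<Sum>j=1..k-1. t * (real j - real k * g)^2 * exp (- t * real k) * p_bin k g j)"
    by (simp add: sum_distrib_left algebra_simps)
  also have "\<dots> \<le> (\<Sum>j=1..k-1. - ((real j - real k * g) * (exp ((-t) * (real j - real k * g)) - 1) * p_bin k g j))"
  proof (rule sum_mono)
    fix j assume j: "j \<in> {1..k-1}"
    define d where "d = real k * g - real j"
    have pj: "p_bin k g j \<ge> 0" unfolding p_bin_def using assms by simp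
    have "exp (- t * real k) \<le> exp (- t * \<bar>d\<bar>)"
      using d_bound[OF assms(2,3) j] assms(1) unfolding d_def by (simp add: mult_left_mono abs_minus_commute)
    then have "t * d^2 * exp (- t * real k) \<le> t * d^2 * exp (- t * \<bar>d\<bar>)"
      using assms(1) by (simp add: mult_left_mono)
    also have "\<dots> \<le> d * (exp (t * d) - 1)" by (rule term_ineq[OF assms(1)])
    finally have "t * d^2 * exp (- t * real k) * p_bin k g j \<le> d * (exp (t * d) - 1) * p_bin k g j"
      using pj by (simp add: mult_right_mono)
    then show "t * (real j - real k * g)^2 * exp (- t * real k) * p_bin k g j
        \<le> - ((real j - real k * g) * (exp ((-t) * (real j - real k * g)) - 1) * p_bin k g j)"
      unfolding d_def by (simp add: power2_commute algebra_simps)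
  qed
  also have "\<dots> = - (G k g (- t) - G k g 0)"
    unfolding G_diff by (simp add: sum_negf)
  finally show ?thesis by linarith
qed

lemma S_lower:
  assumes "k \<ge> 3" "2/5 \<le> g" "g \<le> 3/5"
  shows "(\<Sum>j=1..k-1. (real j - real k * g)^2 * p_bin k g j) \<ge> (1/25) * (2/5)^k"
proof -
  have nn: "\<forall>j\<in>{1..k-1}. 0 \<le> (real j - real k * g)^2 * p_bin k g j"
    using assms unfolding p_bin_def by auto
  have "(real 1 - real k * g)^2 * p_bin k g 1 \<le> (\<Sum>j=1..k-1. (real j - real k * g)^2 * p_bin k g j)"
    by (rule member_le_sum) (use assms nn in auto)
  moreover have "(1/25) * (2/5)^k \<le> (real 1 - real k * g)^2 * p_bin k g 1"
  proof -
    have "real k * g \<ge> 3 * (2/5)" using assms by (intro mult_mono) auto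
    then have "1/5 \<le> real k * g - 1" by simp
    then have "(1/5::real)^2 \<le> (real k * g - 1)^2"
      by (intro power_mono) auto
    then have h1: "(1/5)^2 \<le> (real 1 - real k * g)^2"
      by (simp add: power2_commute)
    have "(2/5)^(k-1) \<le> (1 - g)^(k-1)" using assms by (intro power_mono) auto
    then have "(2/5) * (2/5)^(k-1) \<le> g * (1 - g)^(k-1)" using assms by (intro mult_mono) auto
    moreover have "(2/5)^k = (2/5) * ((2/5::real)^(k-1))" using assms
      by (cases k) auto
    moreover have "g * (1 - g)^(k-1) \<le> real k * g * (1 - g)^(k-1)"
      using assms by (intro mult_right_mono) auto
    ultimately have h2: "(2/5)^k \<le> p_bin k g 1" unfolding p_bin_def by simp
    have "(1/5)^2 * (2/5)^k \<le> (real 1 - real k * g)^2 * p_bin k g 1"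
      using h1 h2 by (intro mult_mono) auto
    then show ?thesis by (simp add: power2_eq_square)
  qed
  ultimately show ?thesis by linarith
qed

lemma G0_bound:
  assumes "k \<ge> 2" "0 \<le> g" "g \<le> 1"
  shows "\<bar>G k g 0\<bar> \<le> 2 * real k ^ 2 * \<bar>g - 1/2\<bar>"
proof -
  have a: "\<bar>real k * g * (1 - g)\<bar> \<le> real k" using assms
    by (simp add: abs_mult mult_le_one mult_left_le_one_le)
  have b: "\<bar>(1 - g) ^ (k - 1) - g ^ (k - 1)\<bar> \<le> real (k - 1) * \<bar>(1 - g) - g\<bar>"
    by (rule pow_diff_le) (use assms in auto)
  have c: "real (k - 1) * \<bar>(1 - g) - g\<bar> \<le> 2 * real k * \<bar>g - 1/2\<bar>"
  proof -
    have "\<bar>(1 - g) - g\<bar> = 2 * \<bar>g - 1/2\<bar>" by (simp add: abs_if)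
    moreover have "real (k - 1) \<le> real k" by simp
    ultimately show ?thesis by (simp add: mult_right_mono)
  qed
  have "\<bar>G k g 0\<bar> = \<bar>real k * g * (1 - g)\<bar> * \<bar>(1 - g) ^ (k - 1) - g ^ (k - 1)\<bar>"
    unfolding G0[OF assms(1)] by (simp add: abs_mult)
  also have "\<dots> \<le> real k * (2 * real k * \<bar>g - 1/2\<bar>)"
    using a b c by (intro mult_mono) auto
  finally show ?thesis by (simp add: power2_eq_square algebra_simps)
qed

lemma powr_small:
  assumes "d > 0" "real n \<ge> (1/d)^3" "n \<ge> 1"
  shows "real n powr (-1/3) \<le> d"
proof -
  define e where "e = real n powr (-1/3)"
  have e0: "e \<ge> 0" unfolding e_def by simp
  have ep: "e > 0" unfolding e_def using assms by simp
  have "e ^ 3 = e powr (real 3)" using powr_realpow[OF ep, of 3] by simp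
  also have "\<dots> = real n powr (-1/3 * real 3)" unfolding e_def by (rule powr_powr)
  also have "\<dots> = real n powr (-1)" by simp
  finally have "e ^ 3 = real n powr (-1)" .
  also have "\<dots> = 1 / real n" using assms by (simp add: powr_minus_divide)
  also have "\<dots> \<le> 1 / (1/d)^3" using assms by (intro divide_left_mono) auto
  also have "\<dots> = d ^ 3" by (simp add: power_divide)
  finally have "e ^ 3 \<le> d ^ 3" .
  then have "e \<le> d" using power_mono_iff[of e d 3] e0 assms(1) by simp
  then show ?thesis unfolding e_def .
qed

lemma G_cont: "continuous_on A (G k g)"
  unfolding G_def by (intro continuous_intros)

theorem lemma2p5:
  fixes k :: nat
  assumes "k \<ge> 3"
  shows "\<exists>n0 :: nat. \<exists>C :: real.
    (\<forall>n \<ge> n0. \<forall>\<gamma> :: real. \<bar>\<gamma> - 1/2\<bar> \<le> real n powr (-1/3) \<longrightarrow>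
        (\<exists>!l :: real. (\<Sum>j=1..k-1. real j * nu k \<gamma> l j) = real k * \<gamma>) \<and>
        (\<forall>l :: real. (\<Sum>j=1..k-1. real j * nu k \<gamma> l j) = real k * \<gamma> \<longrightarrow>
              \<bar>l\<bar> \<le> C * real n powr (-1/3)))
    \<and> (\<forall>l :: real. (\<Sum>j=1..k-1. real j * nu k (1/2) l j) = real k * (1/2) \<longleftrightarrow> l = 0)"
proof -
  have k2: "k \<ge> 2" using assms by simp
  define V :: real where "V = (1/25) * (2/5)^k"
  define K :: real where "K = 2 * real k ^ 2"
  define C where "C = K * exp (real k) / V"
  define \<delta> :: real where "\<delta> = min (1/10) (1/C)"
  define n0 :: nat where "n0 = nat \<lceil>(1/\<delta>)^3\<rceil> + 1"
  have V0: "V > 0" unfolding V_def by simp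
  have K0: "K > 0" unfolding K_def using assms by simp
  have C0: "C > 0" unfolding C_def using V0 K0 by simp
  have d0: "\<delta> > 0" unfolding \<delta>_def using C0 by simp
  have CV: "C * exp (- real k) * V = K" unfolding C_def using V0
    by (simp add: exp_minus field_simps)
  have part1: "(\<exists>!l :: real. (\<Sum>j=1..k-1. real j * nu k \<gamma> l j) = real k * \<gamma>) \<and>
        (\<forall>l :: real. (\<Sum>j=1..k-1. real j * nu k \<gamma> l j) = real k * \<gamma> \<longrightarrow>
              \<bar>l\<bar> \<le> C * real n powr (-1/3))"
    if n: "n \<ge> n0" and g: "\<bar>\<gamma> - 1/2\<bar> \<le> real n powr (-1/3)" for n \<gamma>
  proof -
    define \<epsilon> where "\<epsilon> = real n powr (-1/3)"
    have n1: "n \<ge> 1" using n unfolding n0_def by simp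
    have c1: "(1/\<delta>)^3 \<le> real (nat \<lceil>(1/\<delta>)^3\<rceil>)" by (rule real_nat_ceiling_ge)
    have c2: "real (nat \<lceil>(1/\<delta>)^3\<rceil>) \<le> real n" using n unfolding n0_def by linarith
    have "real n \<ge> (1/\<delta>)^3" using c1 c2 by linarith
    then have e\<delta>: "\<epsilon> \<le> \<delta>" unfolding \<epsilon>_def using powr_small d0 n1 by blast
    have e0: "\<epsilon> \<ge> 0" unfolding \<epsilon>_def by simp
    have ge: "\<bar>\<gamma> - 1/2\<bar> \<le> \<epsilon>" using g unfolding \<epsilon>_def .
    have "\<epsilon> \<le> 1/10" using e\<delta> unfolding \<delta>_def by simp
    then have g1: "2/5 \<le> \<gamma>" "\<gamma> \<le> 3/5" using ge by linarith+
    have kg: "real k * \<gamma> \<noteq> 1"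
    proof -
      have "real k * \<gamma> \<ge> 3 * (2/5)" using assms g1 by (intro mult_mono) auto
      then show ?thesis by simp
    qed
    define t where "t = C * \<epsilon>"
    have t0: "t \<ge> 0" unfolding t_def using C0 e0 by simp
    have t1: "t \<le> 1"
    proof -
      have "C * \<epsilon> \<le> C * (1/C)" using e\<delta> C0 unfolding \<delta>_def by (intro mult_left_mono) auto
      then show ?thesis unfolding t_def using C0 by simp
    qed
    have gg: "0 \<le> \<gamma>" "\<gamma> \<le> 1" "0 < \<gamma>" "\<gamma> < 1" using g1 by auto
    define S where "S = (\<Sum>j=1..k-1. (real j - real k * \<gamma>)^2 * p_bin k \<gamma> j)"
    have SV: "S \<ge> V" unfolding S_def V_def using S_lower[OF assms g1] .
    have ex: "exp (- t * real k) \<ge> exp (- real k)" using t1 t0 by (simp add: mult_left_le_one_le)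
    have low: "t * exp (- t * real k) * S \<ge> K * \<epsilon>"
    proof -
      have "t * exp (- t * real k) * S \<ge> t * exp (- real k) * V"
        using ex SV t0 V0 by (intro mult_mono) auto
      moreover have "t * exp (- real k) * V = (C * exp (- real k) * V) * \<epsilon>"
        unfolding t_def by (simp add: mult_ac)
      moreover note CV
      ultimately show ?thesis by simp
    qed
    have G0b: "\<bar>G k \<gamma> 0\<bar> \<le> K * \<epsilon>"
    proof -
      have "K * \<bar>\<gamma> - 1/2\<bar> \<le> K * \<epsilon>" using ge K0 by (intro mult_left_mono) auto
      then show ?thesis using G0_bound[OF k2 gg(1,2)] unfolding K_def by linarith
    qed
    have Gt: "G k \<gamma> t \<ge> 0" using G_lower[OF t0 gg(1,2), of k] low G0b unfolding S_def by linarith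
    have Gmt: "G k \<gamma> (-t) \<le> 0" using G_upper[OF t0 gg(1,2), of k] low G0b unfolding S_def by linarith
    obtain l0 where l0: "-t \<le> l0" "l0 \<le> t" "G k \<gamma> l0 = 0"
      using IVT'[of "G k \<gamma>" "-t" 0 t] Gt Gmt t0 G_cont by auto
    have sm: "G k \<gamma> a < G k \<gamma> b" if "a < b" for a b
      using G_strict_mono[OF gg(3,4) k2 kg that] .
    have bnd: "\<bar>l\<bar> \<le> t" if "G k \<gamma> l = 0" for l
    proof (rule ccontr)
      assume "\<not> \<bar>l\<bar> \<le> t"
      then have "l > t \<or> l < -t" by auto
      then show False using sm[of t l] sm[of l "-t"] that Gt Gmt by auto
    qed
    have uq: "l = l0" if "G k \<gamma> l = 0" for l
      using sm[of l l0] sm[of l0 l] that l0(3) by (cases "l < l0"; cases "l0 < l") auto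
    show ?thesis
      unfolding eq_iff[OF gg(3,4) k2]
      using l0(3) uq bnd unfolding t_def \<epsilon>_def by blast
  qed
  have part2: "(\<Sum>j=1..k-1. real j * nu k (1/2) l j) = real k * (1/2) \<longleftrightarrow> l = 0" for l
  proof -
    have kg: "real k * (1/2) \<noteq> 1" using assms by simp
    have z: "G k (1/2) 0 = 0" unfolding G0[OF k2] by simp
    have sm: "G k (1/2) a < G k (1/2) b" if "a < b" for a b
      using G_strict_mono[OF _ _ k2 kg that] by simp
    have ei: "(\<Sum>j=1..k-1. real j * nu k (1/2) l j) = real k * (1/2) \<longleftrightarrow> G k (1/2) l = 0"
      by (rule eq_iff) (use k2 in auto)
    show ?thesis unfolding ei
      using sm[of l 0] sm[of 0 l] z by (cases "l < 0"; cases "0 < l") auto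
  qed
  show ?thesis using part1 part2 by blast
qed

end
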